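(* Let $s,M,N\in\mathbb{N}$ with $N$ even, and let $f_1,\ldots,f_M\in L^2(\mathbb{R}^s)$ be linearly independent. Let $\mathcal{T}$ be the Euclidean space of tensors of order $N$ with dimension $M$ in each mode, and for $\mathcal{A}\in\mathcal{T}$ let $h(\mathcal{A})\in L^2((\mathbb{R}^s)^N)$ be the function $(\mathbf{x}_1,\ldots,\mathbf{x}_N)\mapsto\sum_{d_1,\ldots,d_N=1}^M\mathcal{A}_{d_1\ldots d_N}\prod_{i=1}^N f_{d_i}(\mathbf{x}_i)$. Let $\{\mathcal{A}^\lambda\}_{\lambda\in\Lambda}\subset\mathcal{T}$ be a family of tensors and $\mathcal{A}^*\in\mathcal{T}$ a tensor not in the family, such that $\operatorname{rank}([\mathcal{A}^\lambda])<\operatorname{rank}([\mathcal{A}^*])$ for all $\lambda\in\Lambda$. Then there exists $\epsilon>0$ such that for all $\lambda\in\Lambda$: $\int|h(\mathcal{A}^\lambda)-h(\mathcal{A}^* )|^2>\epsilon$.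
   Context: For an order-$N$ tensor $\mathcal{A}\in\mathbb{R}^{M_1\times\cdots\times M_N}$ ($N$ even), the matricization $[\mathcal{A}]$ is the matrix with $M_1M_3\cdots M_{N-1}$ rows and $M_2M_4\cdots M_N$ columns, whose rows are indexed by the odd modes and columns by the even modes: the entry $\mathcal{A}_{d_1\ldots d_N}$ is stored in row $1+\sum_{i=1}^{N/2}(d_{2i-1}-1)\prod_{j=i+1}^{N/2}M_{2j-1}$ and column $1+\sum_{i=1}^{N/2}(d_{2i}-1)\prod_{j=i+1}^{N/2}M_{2j}$. Linear independence of $f_1,\ldots,f_M$ is in the vector space $L^2(\mathbb{R}^s)$; the integral is over $(\mathbb{R}^s)^N$ with Lebesgue measure. *)

theory Defs
  imports "HOL-Probability.Probability" "Jordan_Normal_Form.DL_Rank"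
begin

text \<open>Modes and mode indices are
  0-based: a multi-index is an element of {..<N} ->E {..<M}.\<close>

definition tidx :: "nat \<Rightarrow> nat \<Rightarrow> (nat \<Rightarrow> nat) set" where
  "tidx N M = ({..<N} \<rightarrow>\<^sub>E {..<M})"

definition tensor_space :: "nat \<Rightarrow> nat \<Rightarrow> ((nat \<Rightarrow> nat) \<Rightarrow> real) set" where
  "tensor_space N M = {A. \<forall>d. d \<notin> tidx N M \<longrightarrow> A d = 0}"

text \<open>Matricization: rows indexed by the odd modes (1st, 3rd, ... i.e. 0-based modes 0,2,...),
  columns by the even modes, mixed radix with the first such mode most significant.\<close>

definition matricize :: "nat \<Rightarrow> nat \<Rightarrow> ((nat \<Rightarrow> nat) \<Rightarrow> real) \<Rightarrow> real mat" where
  "matricize N M A = (let K = N div 2 in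
     mat (M ^ K) (M ^ K) (\<lambda>(r, c). A (\<lambda>k. if k < N then
        (if even k then r div M ^ (K - 1 - k div 2) mod M
                   else c div M ^ (K - 1 - k div 2) mod M) else undefined)))"

definition mat_rank :: "real mat \<Rightarrow> nat" where
  "mat_rank A = vec_space.rank (dim_row A) A"

text \<open>The function h(A) on (R^s)^N, points represented as x :: nat \<Rightarrow> 'a.\<close>

definition tensor_fun :: "nat \<Rightarrow> nat \<Rightarrow> (nat \<Rightarrow> 'a \<Rightarrow> real) \<Rightarrow> ((nat \<Rightarrow> nat) \<Rightarrow> real)
    \<Rightarrow> (nat \<Rightarrow> 'a) \<Rightarrow> real" where
  "tensor_fun N M f A x = (\<Sum>d\<in>tidx N M. A d * (\<Prod>i<N. f (d i) (x i)))"

definition square_integrable :: "('a::euclidean_space \<Rightarrow> real) \<Rightarrow> bool" where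
  "square_integrable g \<longleftrightarrow> g \<in> borel_measurable lborel \<and> integrable lborel (\<lambda>x. (g x)\<^sup>2)"

text \<open>Linear independence of f_0,...,f_{M-1} as elements of L^2, i.e. modulo a.e. equality.\<close>

definition L2_lin_indep :: "nat \<Rightarrow> (nat \<Rightarrow> 'a::euclidean_space \<Rightarrow> real) \<Rightarrow> bool" where
  "L2_lin_indep M f \<longleftrightarrow>
     (\<forall>c :: nat \<Rightarrow> real. (AE x in lborel. (\<Sum>d<M. c d * f d x) = 0) \<longrightarrow> (\<forall>d<M. c d = 0))"

end

theory Submission
  imports Defs "Jordan_Normal_Form.DL_Rank_Submatrix"
begin


lemma pd_lower:
  fixes a :: "'i \<Rightarrow> 'i \<Rightarrow> real" and S :: "'i set"
  assumes fin: "finite S"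
    and pd: "\<And>v. (\<exists>i\<in>S. v i \<noteq> 0) \<Longrightarrow> (\<Sum>i\<in>S. \<Sum>j\<in>S. a i j * v i * v j) > 0"
  shows "\<exists>c>0. \<forall>v. c * (\<Sum>i\<in>S. (v i)^2) \<le> (\<Sum>i\<in>S. \<Sum>j\<in>S. a i j * v i * v j)"
proof (cases "S = {}")
  case True then show ?thesis by (intro exI[of _ 1]) simp
next
  case False
  then obtain i0 where i0: "i0 \<in> S" by blast
  define q where "q v = (\<Sum>i\<in>S. \<Sum>j\<in>S. a i j * v i * v j)" for v :: "'i \<Rightarrow> real"
  define B where "B i = (if i \<in> S then {-1..1} else {0::real})" for i
  define K where "K = PiE UNIV B \<inter> {v. (\<Sum>i\<in>S. (v i)^2) = 1}"
  have "compactin (product_topology (\<lambda>_. euclidean) UNIV) (PiE UNIV B)"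
    by (subst compactin_PiE) (auto simp: B_def)
  hence c1: "compact (PiE UNIV B)" by (simp add: euclidean_product_topology)
  have cont_sq: "continuous_on UNIV (\<lambda>v::'i\<Rightarrow>real. \<Sum>i\<in>S. (v i)^2)"
    by (intro continuous_intros continuous_on_product_coordinates)
  have "closed {v::'i\<Rightarrow>real. (\<Sum>i\<in>S. (v i)^2) = 1}"
    by (rule closed_Collect_eq[OF cont_sq]) (intro continuous_intros)
  hence compK: "compact K" unfolding K_def using c1 by (rule compact_Int_closed[rotated])
  have "(\<Sum>i\<in>S. ((\<lambda>i. if i = i0 then 1 else 0::real) i)^2) = (\<Sum>i\<in>S. if i = i0 then 1 else 0)"
    by (intro sum.cong) auto
  also have "\<dots> = 1" using i0 fin by simp
  finally have "(\<lambda>i. if i = i0 then 1 else 0::real) \<in> K"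
    using i0 fin by (auto simp: K_def B_def PiE_def extensional_def)
  hence Kne: "K \<noteq> {}" by blast
  have contq: "continuous_on K q" unfolding q_def
    by (intro continuous_intros continuous_on_subset[OF continuous_on_product_coordinates]) auto
  obtain w where wK: "w \<in> K" and wmin: "\<And>y. y \<in> K \<Longrightarrow> q w \<le> q y"
    using continuous_attains_inf[OF compK Kne contq] by blast
  have "\<exists>i\<in>S. w i \<noteq> 0"
  proof (rule ccontr)
    assume "\<not> ?thesis"
    hence "(\<Sum>i\<in>S. (w i)^2) = 0" by simp
    with wK show False by (simp add: K_def)
  qed
  hence wpos: "q w > 0" unfolding q_def by (rule pd)
  show ?thesis
  proof (intro exI[of _ "q w"] conjI allI wpos)
    fix v :: "'i \<Rightarrow> real"
    have "q w * (\<Sum>i\<in>S. (v i)^2) \<le> q v"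
    proof (cases "\<exists>i\<in>S. v i \<noteq> 0")
      case False
      hence "(\<Sum>i\<in>S. (v i)^2) = 0" "q v = 0" by (auto simp: q_def)
      thus ?thesis by simp
    next
      case True
      define n where "n = (\<Sum>i\<in>S. (v i)^2)"
      have npos: "n > 0" unfolding n_def using True fin
        by (metis (mono_tags, lifting) sum_pos2 power2_less_eq_zero_iff zero_le_power2 not_le)
      define u where "u i = (if i \<in> S then v i / sqrt n else 0)" for i
      have su: "(\<Sum>i\<in>S. (u i)^2) = 1"
      proof -
        have "(\<Sum>i\<in>S. (u i)^2) = (\<Sum>i\<in>S. (v i)^2 / n)"
          by (intro sum.cong) (use npos in \<open>auto simp: u_def power_divide\<close>)
        also have "\<dots> = 1" using npos by (simp add: sum_divide_distrib[symmetric] n_def)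
        finally show ?thesis .
      qed
      have "u \<in> K"
      proof -
        have "(u i)^2 \<le> 1" if "i \<in> S" for i
          using su member_le_sum[of i S "\<lambda>i. (u i)^2"] that fin by auto
        hence bnd: "\<bar>u i\<bar> \<le> 1" if "i \<in> S" for i
          using that by (metis abs_le_square_iff abs_one one_power2)
        have "u x \<in> B x" for x
        proof (cases "x \<in> S")
          case True then show ?thesis using bnd[OF True] by (auto simp: B_def abs_le_iff)
        next
          case False then show ?thesis by (simp add: B_def u_def)
        qed
        thus ?thesis using su by (auto simp: K_def)
      qed
      hence "q w \<le> q u" by (rule wmin)
      also have "q u = q v / n"
      proof -
        have "q u = (\<Sum>i\<in>S. \<Sum>j\<in>S. a i j * v i * v j / n)" unfolding q_def
          by (intro sum.cong refl) (use npos in \<open>auto simp: u_def real_sqrt_mult[symmetric]\<close>)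
        thus ?thesis by (simp add: q_def sum_divide_distrib)
      qed
      finally show ?thesis using npos by (simp add: n_def field_simps)
    qed
    thus "q w * (\<Sum>i\<in>S. (v i)^2) \<le> (\<Sum>i\<in>S. \<Sum>j\<in>S. a i j * v i * v j)" by (simp add: q_def)
  qed
qed



lemma (in vec_space) rank_cols_indep:
  assumes C: "C \<in> carrier_mat n nc"
  shows "\<exists>J. J \<subseteq> {..<nc} \<and> card J = rank C \<and> inj_on (col C) J \<and> lin_indpt (col C ` J)"
proof -
  have e: "lin_indpt {}" by (simp add: lin_dep_def)
  obtain S where S: "finite S" "maximal S (\<lambda>T. T \<subseteq> set (cols C) \<and> lin_indpt T)"
    using maximal_exists_superset[of "set (cols C)" "\<lambda>T. T \<subseteq> set (cols C) \<and> lin_indpt T" "{}"] e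
    by auto
  have r: "rank C = card S" by (rule rank_card_indpt[OF C S(2)])
  have S1: "S \<subseteq> set (cols C)" "lin_indpt S"
    using S(2) unfolding maximal_def by auto
  have "set (cols C) = col C ` {..<nc}" using C by (auto simp: cols_def)
  hence Ssub: "S \<subseteq> col C ` {..<nc}" "lin_indpt S" using S1 by auto
  then obtain J where J: "J \<subseteq> {..<nc}" "inj_on (col C) J" "S = col C ` J"
    by (auto simp: subset_image_inj)
  show ?thesis using J r Ssub(2) card_image[OF J(2)] by (intro exI[of _ J]) auto
qed

lemma (in vec_space) low_rank_dep:
  assumes B: "B \<in> carrier_mat n nc" and J: "J \<subseteq> {..<nc}" and cJ: "card J > rank B"
  shows "\<exists>v. (\<exists>j\<in>J. v j \<noteq> 0) \<and> (\<forall>i<n. (\<Sum>j\<in>J. v j * B $$ (i,j)) = 0)"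
proof -
  have finJ: "finite J" using J finite_subset by blast
  show ?thesis
  proof (cases "inj_on (col B) J")
    case False
    then obtain j1 j2 where j: "j1 \<in> J" "j2 \<in> J" "j1 \<noteq> j2" "col B j1 = col B j2"
      by (auto simp: inj_on_def)
    define v where "v j = (if j = j1 then 1 else if j = j2 then -1 else (0::'a))" for j
    have "(\<Sum>j\<in>J. v j * B $$ (i,j)) = 0" if i: "i < n" for i
    proof -
      have "B $$ (i,j1) = B $$ (i,j2)"
        using j J i B by (metis col_def index_vec carrier_matD subsetD lessThan_iff)
      moreover have "(\<Sum>j\<in>J. v j * B $$ (i,j)) = (\<Sum>j\<in>J. (if j = j1 then B $$ (i,j) else 0) - (if j = j2 then B $$ (i,j) else 0))"
        by (intro sum.cong) (auto simp: v_def j(3))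
      ultimately show ?thesis using j finJ by (simp add: sum_subtractf)
    qed
    moreover have "v j1 \<noteq> 0" by (simp add: v_def)
    ultimately show ?thesis using j by blast
  next
    case True
    define T where "T = col B ` J"
    have cT: "card T = card J" using True by (simp add: T_def card_image)
    have Tsub: "T \<subseteq> set (cols B)" using J B by (auto simp: T_def cols_def)
    have "lin_dep T"
    proof (rule ccontr)
      assume "\<not> lin_dep T"
      hence "rank B \<ge> card T" using rank_ge_card_indpt[OF B Tsub] by blast
      with cT cJ show False by simp
    qed
    then obtain A a w where A: "finite A" "A \<subseteq> T" "lincomb a A = 0\<^sub>v n" "w \<in> A" "a w \<noteq> 0"
      unfolding lin_dep_def by auto
    have Tc: "T \<subseteq> carrier_vec n" using B J by (auto simp: T_def)
    define v where "v j = (if col B j \<in> A then a (col B j) else 0)" for j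
    obtain jw where jw: "jw \<in> J" "col B jw = w" using A(2,4) by (auto simp: T_def)
    have "v jw \<noteq> 0" using jw A by (simp add: v_def)
    moreover have "(\<Sum>j\<in>J. v j * B $$ (i,j)) = 0" if i: "i < n" for i
    proof -
      have "(\<Sum>j\<in>J. v j * B $$ (i,j)) = (\<Sum>j\<in>J. (\<lambda>t. if t \<in> A then a t * t $ i else 0) (col B j))"
        using J B i by (intro sum.cong) (auto simp: v_def)
      also have "\<dots> = (\<Sum>t\<in>T. if t \<in> A then a t * t $ i else 0)"
        unfolding T_def by (rule sum.reindex[OF True, symmetric, unfolded comp_def])
      also have "\<dots> = (\<Sum>t\<in>A. a t * t $ i)"
        using A(2) finJ by (simp add: sum.If_cases T_def Int_absorb1)
      also have "\<dots> = lincomb a A $ i"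
        using lincomb_index[OF i] A(2) Tc by auto
      finally show ?thesis using A(3) i by simp
    qed
    ultimately show ?thesis using jw by blast
  qed
qed


lemma (in vec_space) indep_cols_nonzero:
  assumes C: "C \<in> carrier_mat n nc" and J: "J \<subseteq> {..<nc}" "inj_on (col C) J" "lin_indpt (col C ` J)"
    and v: "\<exists>j\<in>J. v j \<noteq> 0"
  shows "\<exists>i<n. (\<Sum>j\<in>J. v j * C $$ (i,j)) \<noteq> 0"
proof (rule ccontr)
  have finJ: "finite J" using J(1) finite_subset by blast
  assume "\<not> ?thesis"
  hence z: "\<And>i. i < n \<Longrightarrow> (\<Sum>j\<in>J. v j * C $$ (i,j)) = 0" by blast
  define b where "b t = v (the_inv_into J (col C) t)" for t
  have Tc: "col C ` J \<subseteq> carrier_vec n" using C by auto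
  have "lincomb b (col C ` J) = 0\<^sub>v n"
  proof (rule eq_vecI)
    show "dim_vec (lincomb b (col C ` J)) = dim_vec (0\<^sub>v n)"
      using lincomb_dim[OF _ Tc] finJ by simp
    fix i assume "i < dim_vec (0\<^sub>v n)"
    hence i: "i < n" by simp
    have "lincomb b (col C ` J) $ i = (\<Sum>t\<in>col C ` J. b t * t $ i)"
      by (rule lincomb_index[OF i Tc])
    also have "\<dots> = (\<Sum>j\<in>J. b (col C j) * col C j $ i)"
      by (rule sum.reindex[OF J(2), unfolded comp_def])
    also have "\<dots> = (\<Sum>j\<in>J. v j * C $$ (i,j))"
      using J(1,2) C i by (intro sum.cong) (auto simp: b_def the_inv_into_f_f)
    finally show "lincomb b (col C ` J) $ i = 0\<^sub>v n $ i" using z i by simp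
  qed
  moreover obtain j where j: "j \<in> J" "v j \<noteq> 0" using v by blast
  moreover have "b (col C j) = v j" using j J(2) by (simp add: b_def the_inv_into_f_f)
  ultimately have "lin_dep (col C ` J)"
    unfolding lin_dep_def
    using finJ by (intro exI[of _ "col C ` J"] exI[of _ b] exI[of _ "col C j"]) auto
  with J(3) show False by blast
qed



lemma rank_gap:
  fixes C :: "real mat"
  assumes C: "C \<in> carrier_mat n nc"
  shows "\<exists>\<delta>>0. \<forall>B\<in>carrier_mat n nc. vec_space.rank n B < vec_space.rank n C \<longrightarrow>
            \<delta> \<le> (\<Sum>i<n. \<Sum>j<nc. (C $$ (i,j) - B $$ (i,j))^2)"
proof -
  obtain J where J: "J \<subseteq> {..<nc}" "card J = vec_space.rank n C" "inj_on (col C) J"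
      "module.lin_indpt class_ring (module_vec TYPE(real) n) (col C ` J)"
    using vec_space.rank_cols_indep[OF C] by blast
  have finJ: "finite J" using J(1) finite_subset by blast
  define a where "a j k = (\<Sum>i<n. C $$ (i,j) * C $$ (i,k))" for j k
  have qeq: "(\<Sum>j\<in>J. \<Sum>k\<in>J. a j k * v j * v k) = (\<Sum>i<n. (\<Sum>j\<in>J. v j * C $$ (i,j))^2)" for v
  proof -
    have "(\<Sum>j\<in>J. \<Sum>k\<in>J. a j k * v j * v k) = (\<Sum>j\<in>J. \<Sum>k\<in>J. \<Sum>i<n. (v j * C $$ (i,j)) * (v k * C $$ (i,k)))"
      by (simp add: a_def sum_distrib_left sum_distrib_right mult_ac)
    also have "\<dots> = (\<Sum>i<n. \<Sum>j\<in>J. \<Sum>k\<in>J. (v j * C $$ (i,j)) * (v k * C $$ (i,k)))"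
      by (simp add: sum.swap[of _ J "{..<n}"] sum.swap[of _ J "{..<n}"])
    also have "\<dots> = (\<Sum>i<n. (\<Sum>j\<in>J. v j * C $$ (i,j))^2)"
      by (simp add: power2_eq_square sum_product)
    finally show ?thesis .
  qed
  have pd: "(\<Sum>j\<in>J. \<Sum>k\<in>J. a j k * v j * v k) > 0" if v: "\<exists>j\<in>J. v j \<noteq> 0" for v
  proof -
    have "\<exists>i<n. (\<Sum>j\<in>J. v j * C $$ (i,j)) \<noteq> 0"
      by (rule vec_space.indep_cols_nonzero[OF C J(1,3,4) v])
    then obtain i where i: "i < n" "(\<Sum>j\<in>J. v j * C $$ (i,j)) \<noteq> 0" by blast
    have "0 < (\<Sum>j\<in>J. v j * C $$ (i,j))^2" using i by simp
    also have "\<dots> \<le> (\<Sum>i<n. (\<Sum>j\<in>J. v j * C $$ (i,j))^2)"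
      using i by (intro member_le_sum) auto
    finally show ?thesis using qeq by simp
  qed
  obtain c where c: "c > 0" "\<And>v. c * (\<Sum>j\<in>J. (v j)^2) \<le> (\<Sum>j\<in>J. \<Sum>k\<in>J. a j k * v j * v k)"
    using pd_lower[OF finJ, of a] pd by blast
  show ?thesis
  proof (intro exI[of _ c] conjI ballI impI c(1))
    fix B :: "real mat" assume B: "B \<in> carrier_mat n nc" and r: "vec_space.rank n B < vec_space.rank n C"
    obtain v where v: "\<exists>j\<in>J. v j \<noteq> 0" "\<And>i. i < n \<Longrightarrow> (\<Sum>j\<in>J. v j * B $$ (i,j)) = 0"
      using vec_space.low_rank_dep[OF B J(1)] r J(2) by auto
    define nv where "nv = (\<Sum>j\<in>J. (v j)^2)"
    have nvpos: "nv > 0" unfolding nv_def using v(1) finJ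
      by (metis (mono_tags, lifting) sum_pos2 power2_less_eq_zero_iff zero_le_power2 not_le)
    have "c * nv \<le> (\<Sum>i<n. (\<Sum>j\<in>J. v j * C $$ (i,j))^2)" using c(2)[of v] qeq nv_def by simp
    also have "\<dots> = (\<Sum>i<n. (\<Sum>j\<in>J. v j * (C $$ (i,j) - B $$ (i,j)))^2)"
    proof (intro sum.cong refl)
      fix i assume "i \<in> {..<n}"
      hence "(\<Sum>j\<in>J. v j * B $$ (i,j)) = 0" using v(2) by simp
      thus "(\<Sum>j\<in>J. v j * C $$ (i,j))^2 = (\<Sum>j\<in>J. v j * (C $$ (i,j) - B $$ (i,j)))^2"
        by (simp add: right_diff_distrib sum_subtractf)
    qed
    also have "\<dots> \<le> (\<Sum>i<n. nv * (\<Sum>j\<in>J. (C $$ (i,j) - B $$ (i,j))^2))"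
      unfolding nv_def by (intro sum_mono Cauchy_Schwarz_ineq_sum)
    also have "\<dots> \<le> (\<Sum>i<n. nv * (\<Sum>j<nc. (C $$ (i,j) - B $$ (i,j))^2))"
      using nvpos J(1) by (intro sum_mono mult_left_mono sum_mono2) auto
    also have "\<dots> = nv * (\<Sum>i<n. \<Sum>j<nc. (C $$ (i,j) - B $$ (i,j))^2)"
      by (simp add: sum_distrib_left)
    finally show "c \<le> (\<Sum>i<n. \<Sum>j<nc. (C $$ (i,j) - B $$ (i,j))^2)" using nvpos by simp
  qed
qed



lemma psf_lborel: "product_sigma_finite (\<lambda>_::nat. (lborel::'a::euclidean_space measure))"
  unfolding product_sigma_finite_def by (simp add: lborel.sigma_finite_measure_axioms)

lemma finite_tidx: "finite (tidx N M)"
  unfolding tidx_def by (simp add: finite_PiE)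

lemma tf_meas:
  assumes meas: "\<And>a. a < M \<Longrightarrow> f a \<in> borel_measurable lborel"
  shows "tensor_fun n M f v \<in> borel_measurable (PiM {..<n} (\<lambda>_. (lborel::'a::euclidean_space measure)))"
  unfolding tensor_fun_def
proof (intro borel_measurable_sum borel_measurable_times borel_measurable_prod borel_measurable_const)
  fix d i assume d: "d \<in> tidx n M" and i: "i \<in> {..<n}"
  have "d i < M" using d i by (auto simp: tidx_def PiE_def Pi_def)
  hence "f (d i) \<in> borel_measurable lborel" by (rule meas)
  moreover have "(\<lambda>x. x i) \<in> measurable (PiM {..<n} (\<lambda>_. (lborel::'a measure))) lborel"
    using i by (intro measurable_component_singleton) auto
  ultimately show "(\<lambda>x. f (d i) (x i)) \<in> borel_measurable (PiM {..<n} (\<lambda>_. lborel))"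
    by (rule measurable_compose[rotated])
qed

lemma tf_Suc:
  "tensor_fun (Suc n) M f v (x(n:=y)) = (\<Sum>a<M. tensor_fun n M f (\<lambda>d. v (d(n:=a))) x * f a y)"
proof -
  have e: "tidx (Suc n) M = (\<lambda>(a,g). g(n:=a)) ` ({..<M} \<times> tidx n M)"
    unfolding tidx_def lessThan_Suc by (rule PiE_insert_eq)
  have inj: "inj_on (\<lambda>(a,g). g(n:=a)) ({..<M} \<times> tidx n M)"
    unfolding tidx_def by (rule inj_combinator) simp
  have "tensor_fun (Suc n) M f v (x(n:=y)) =
      (\<Sum>(a,g)\<in>{..<M} \<times> tidx n M. v (g(n:=a)) * (\<Prod>i<Suc n. f ((g(n:=a)) i) ((x(n:=y)) i)))"
    unfolding tensor_fun_def e by (subst sum.reindex[OF inj]) (simp add: case_prod_beta')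
  also have "\<dots> = (\<Sum>(a,g)\<in>{..<M} \<times> tidx n M. v (g(n:=a)) * (\<Prod>i<n. f (g i) (x i)) * f a y)"
    by (intro sum.cong refl) (auto simp: lessThan_Suc mult_ac intro!: prod.cong)
  also have "\<dots> = (\<Sum>a<M. \<Sum>g\<in>tidx n M. v (g(n:=a)) * (\<Prod>i<n. f (g i) (x i)) * f a y)"
    by (rule sum.cartesian_product[symmetric])
  also have "\<dots> = (\<Sum>a<M. tensor_fun n M f (\<lambda>d. v (d(n:=a))) x * f a y)"
    by (simp add: tensor_fun_def sum_distrib_right)
  finally show ?thesis .
qed

lemma tf_ae_zero:
  assumes meas: "\<And>a. a < M \<Longrightarrow> f a \<in> borel_measurable lborel" and li: "L2_lin_indep M f"
  shows "(AE x in PiM {..<n} (\<lambda>_. (lborel::'a::euclidean_space measure)). tensor_fun n M f v x = 0)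
          \<Longrightarrow> \<forall>d\<in>tidx n M. v d = 0"
proof (induction n arbitrary: v)
  case 0
  have "tensor_fun 0 M f v x = v (\<lambda>_. undefined)" for x by (simp add: tensor_fun_def tidx_def)
  moreover have "AE x in PiM {} (\<lambda>_. lborel::'a measure). tensor_fun 0 M f v x = 0"
    using 0 by (simp only: lessThan_0)
  hence "AE x in count_space {\<lambda>_. undefined}. tensor_fun 0 M f v x = 0" by (simp only: PiM_empty)
  ultimately show ?case by (simp add: AE_count_space tidx_def)
next
  case (Suc n)
  interpret product_sigma_finite "\<lambda>_::nat. (lborel::'a measure)" by (rule psf_lborel)
  let ?P = "PiM {..<n} (\<lambda>_. (lborel::'a measure))"
  define g where "g x = ennreal ((tensor_fun (Suc n) M f v x)^2)" for x
  have gm[measurable]: "g \<in> borel_measurable (PiM (insert n {..<n}) (\<lambda>_. (lborel::'a measure)))"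
    unfolding g_def using tf_meas[OF meas, where n="Suc n" and v=v] by (simp add: lessThan_Suc)
  have "AE x in PiM (insert n {..<n}) (\<lambda>_. lborel::'a measure). tensor_fun (Suc n) M f v x = 0"
    using Suc.prems by (simp only: lessThan_Suc)
  hence "AE x in PiM (insert n {..<n}) (\<lambda>_. lborel). g x = 0"
    by eventually_elim (simp add: g_def)
  hence "integral\<^sup>N (PiM (insert n {..<n}) (\<lambda>_. lborel)) g = 0"
    by (simp add: nn_integral_0_iff_AE[OF gm])
  hence "(\<integral>\<^sup>+ x. (\<integral>\<^sup>+ y. g (x(n:=y)) \<partial>lborel) \<partial>?P) = 0"
    by (simp add: product_nn_integral_insert[OF _ _ gm])
  moreover have "(\<lambda>x. \<integral>\<^sup>+ y. g (x(n:=y)) \<partial>lborel) \<in> borel_measurable ?P"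
    by measurable
  ultimately have ae1: "AE x in ?P. (\<integral>\<^sup>+ y. g (x(n:=y)) \<partial>lborel) = 0"
    by (simp add: nn_integral_0_iff_AE)
  have ae2: "AE x in ?P. \<forall>a<M. tensor_fun n M f (\<lambda>d. v (d(n:=a))) x = 0"
    using ae1 AE_space
  proof eventually_elim
    case (elim x)
    have "(\<lambda>y. g (x(n:=y))) \<in> borel_measurable lborel"
      using measurable_comp[OF measurable_component_update gm, OF elim(2)] by (simp add: comp_def fun_upd_def)
    hence "AE y in lborel. g (x(n:=y)) = 0" using elim(1) by (simp add: nn_integral_0_iff_AE)
    hence "AE y in lborel. (\<Sum>a<M. tensor_fun n M f (\<lambda>d. v (d(n:=a))) x * f a y) = 0"
      by eventually_elim (simp add: g_def tf_Suc)
    note li' = li[unfolded L2_lin_indep_def, rule_format, of "\<lambda>a. tensor_fun n M f (\<lambda>d. v (d(n:=a))) x"]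
    show ?case using li' \<open>AE y in lborel. (\<Sum>a<M. tensor_fun n M f (\<lambda>d. v (d(n:=a))) x * f a y) = 0\<close> by blast
  qed
  have z: "v (d(n:=a)) = 0" if "a < M" "d \<in> tidx n M" for a d
  proof -
    have "AE x in ?P. tensor_fun n M f (\<lambda>d. v (d(n:=a))) x = 0"
      using ae2 by eventually_elim (use that in auto)
    thus ?thesis using Suc.IH that by blast
  qed
  show ?case
  proof
    fix d assume d: "d \<in> tidx (Suc n) M"
    have "d(n:=undefined) \<in> tidx n M" "d n < M"
      using d by (auto simp: tidx_def PiE_def Pi_def extensional_def)
    from z[OF this(2,1)] show "v d = 0" by simp
  qed
qed



lemma int_mult_sq:
  assumes "square_integrable (g::'a::euclidean_space \<Rightarrow> real)" "square_integrable h"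
  shows "integrable lborel (\<lambda>y. g y * h y)"
proof (rule Bochner_Integration.integrable_bound[where f="\<lambda>y. (g y)^2 + (h y)^2"])
  show "integrable lborel (\<lambda>y. (g y)^2 + (h y)^2)"
    using assms by (auto simp: square_integrable_def)
  show "(\<lambda>y. g y * h y) \<in> borel_measurable lborel"
    using assms by (auto simp: square_integrable_def)
  have "\<bar>g y * h y\<bar> \<le> (g y)^2 + (h y)^2" for y
  proof -
    have "0 \<le> (\<bar>g y\<bar> - \<bar>h y\<bar>)^2" by simp
    hence "2 * \<bar>g y\<bar> * \<bar>h y\<bar> \<le> (g y)^2 + (h y)^2"
      by (simp add: power2_eq_square algebra_simps abs_mult_self_eq)
    moreover have "0 \<le> \<bar>g y\<bar> * \<bar>h y\<bar>" by simp
    ultimately show ?thesis unfolding abs_mult by linarith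
  qed
  thus "AE x in lborel. norm (g x * h x) \<le> norm ((g x)^2 + (h x)^2)" by simp
qed

definition phi :: "nat \<Rightarrow> (nat \<Rightarrow> 'a \<Rightarrow> real) \<Rightarrow> (nat \<Rightarrow> nat) \<Rightarrow> (nat \<Rightarrow> 'a) \<Rightarrow> real" where
  "phi N f d x = (\<Prod>i<N. f (d i) (x i))"

lemma gram_int:
  assumes sq: "\<And>a. a < M \<Longrightarrow> square_integrable (f a)"
    and d: "d \<in> tidx N M" and e: "e \<in> tidx N M"
  shows "integrable (PiM {..<N} (\<lambda>_. (lborel::'a::euclidean_space measure))) (\<lambda>x. phi N f d x * phi N f e x)"
proof -
  interpret product_sigma_finite "\<lambda>_::nat. (lborel::'a measure)" by (rule psf_lborel)
  have "integrable (PiM {..<N} (\<lambda>_. (lborel::'a measure))) (\<lambda>x. \<Prod>i\<in>{..<N}. (\<lambda>i y. f (d i) y * f (e i) y) i (x i))"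
  proof (rule product_integrable_prod)
    fix i assume i: "i \<in> {..<N}"
    have "d i < M" "e i < M" using d e i by (auto simp: tidx_def PiE_def Pi_def)
    thus "integrable lborel ((\<lambda>i y. f (d i) y * f (e i) y) i)"
      using int_mult_sq[OF sq sq] by simp
  qed simp
  thus ?thesis by (simp add: phi_def prod.distrib)
qed

lemma Q_eq:
  fixes N :: nat
  assumes sq: "\<And>a. a < M \<Longrightarrow> square_integrable (f a)"
  defines "P \<equiv> PiM {..<N} (\<lambda>_. (lborel::'a::euclidean_space measure))"
  shows "integrable P (\<lambda>x. (tensor_fun N M f v x)^2)"
    and "integral\<^sup>L P (\<lambda>x. (tensor_fun N M f v x)^2) =
         (\<Sum>d\<in>tidx N M. \<Sum>e\<in>tidx N M. integral\<^sup>L P (\<lambda>x. phi N f d x * phi N f e x) * v d * v e)"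
proof -
  have eq: "(tensor_fun N M f v x)^2 = (\<Sum>d\<in>tidx N M. \<Sum>e\<in>tidx N M. (v d * v e) * (phi N f d x * phi N f e x))" for x
    by (simp add: tensor_fun_def phi_def power2_eq_square sum_product mult_ac)
  have ints: "integrable P (\<lambda>x. (v d * v e) * (phi N f d x * phi N f e x))"
    if "d \<in> tidx N M" "e \<in> tidx N M" for d e
    unfolding P_def using gram_int[OF sq that] by simp
  have intsum: "integrable P (\<lambda>x. \<Sum>d\<in>tidx N M. \<Sum>e\<in>tidx N M. (v d * v e) * (phi N f d x * phi N f e x))"
  proof (rule Bochner_Integration.integrable_sum)
    fix d assume d: "d \<in> tidx N M"
    show "integrable P (\<lambda>x. \<Sum>e\<in>tidx N M. (v d * v e) * (phi N f d x * phi N f e x))"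
    proof (rule Bochner_Integration.integrable_sum)
      fix e assume e: "e \<in> tidx N M"
      show "integrable P (\<lambda>x. (v d * v e) * (phi N f d x * phi N f e x))" by (rule ints[OF d e])
    qed
  qed
  show "integrable P (\<lambda>x. (tensor_fun N M f v x)^2)"
    unfolding eq by (rule intsum)
  have "integral\<^sup>L P (\<lambda>x. (tensor_fun N M f v x)^2) =
      (\<Sum>d\<in>tidx N M. \<Sum>e\<in>tidx N M. integral\<^sup>L P (\<lambda>x. (v d * v e) * (phi N f d x * phi N f e x)))"
    unfolding eq using ints
    by (subst Bochner_Integration.integral_sum) (auto intro!: Bochner_Integration.integrable_sum sum.cong Bochner_Integration.integral_sum)
  also have "\<dots> = (\<Sum>d\<in>tidx N M. \<Sum>e\<in>tidx N M. integral\<^sup>L P (\<lambda>x. phi N f d x * phi N f e x) * v d * v e)"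
    by (simp add: mult_ac)
  finally show "integral\<^sup>L P (\<lambda>x. (tensor_fun N M f v x)^2) =
         (\<Sum>d\<in>tidx N M. \<Sum>e\<in>tidx N M. integral\<^sup>L P (\<lambda>x. phi N f d x * phi N f e x) * v d * v e)" .
qed

lemma tensor_pd:
  assumes sq: "\<And>a. a < M \<Longrightarrow> square_integrable (f a)" and li: "L2_lin_indep M f"
  shows "\<exists>c>0. \<forall>v. c * (\<Sum>d\<in>tidx N M. (v d)^2) \<le>
     integral\<^sup>L (PiM {..<N} (\<lambda>_. (lborel::'a::euclidean_space measure))) (\<lambda>x. (tensor_fun N M f v x)^2)"
proof -
  let ?P = "PiM {..<N} (\<lambda>_. (lborel::'a measure))"
  define G where "G d e = integral\<^sup>L ?P (\<lambda>x. phi N f d x * phi N f e x)" for d e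
  have meas: "\<And>a. a < M \<Longrightarrow> f a \<in> borel_measurable lborel" using sq by (simp add: square_integrable_def)
  have pd: "(\<Sum>d\<in>tidx N M. \<Sum>e\<in>tidx N M. G d e * v d * v e) > 0" if v: "\<exists>d\<in>tidx N M. v d \<noteq> 0" for v
  proof -
    have I: "integrable ?P (\<lambda>x. (tensor_fun N M f v x)^2)" by (rule Q_eq(1)[OF sq])
    have "integral\<^sup>L ?P (\<lambda>x. (tensor_fun N M f v x)^2) \<noteq> 0"
    proof
      assume "integral\<^sup>L ?P (\<lambda>x. (tensor_fun N M f v x)^2) = 0"
      hence "AE x in ?P. (tensor_fun N M f v x)^2 = 0"
        using integral_nonneg_eq_0_iff_AE[OF I] by simp
      hence "AE x in ?P. tensor_fun N M f v x = 0" by simp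
      hence "\<forall>d\<in>tidx N M. v d = 0" using tf_ae_zero[OF meas li] by blast
      with v show False by blast
    qed
    moreover have "integral\<^sup>L ?P (\<lambda>x. (tensor_fun N M f v x)^2) \<ge> 0" by simp
    ultimately show ?thesis using Q_eq(2)[OF sq] by (simp add: G_def)
  qed
  obtain c where c: "c > 0" "\<And>v. c * (\<Sum>d\<in>tidx N M. (v d)^2) \<le> (\<Sum>d\<in>tidx N M. \<Sum>e\<in>tidx N M. G d e * v d * v e)"
    using pd_lower[OF finite_tidx, where a=G] pd by blast
  show ?thesis using c Q_eq(2)[OF sq] by (auto simp: G_def)
qed



lemma digits_inj:
  fixes M K a b :: nat
  assumes "a < M^K" "b < M^K" "\<forall>p<K. a div M^p mod M = b div M^p mod M"
  shows "a = b"
  using assms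
proof (induction K arbitrary: a b)
  case 0 then show ?case by simp
next
  case (Suc K)
  have M: "M > 0" using Suc.prems(1) by (cases "M = 0") auto
  have "a div M < M^K" "b div M < M^K"
    using Suc.prems(1,2) M by (auto simp: div_less_iff_less_mult mult.commute)
  moreover have "\<forall>p<K. a div M div M^p mod M = b div M div M^p mod M"
  proof (intro allI impI)
    fix p assume "p < K"
    hence "Suc p < Suc K" by simp
    hence "a div M^(Suc p) mod M = b div M^(Suc p) mod M" using Suc.prems(3) by blast
    thus "a div M div M^p mod M = b div M div M^p mod M" by (simp add: div_mult2_eq)
  qed
  ultimately have "a div M = b div M" by (rule Suc.IH)
  moreover have "a mod M = b mod M" using Suc.prems(3) by (metis div_by_1 power_0 zero_less_Suc)
  ultimately show ?case by (metis div_mult_mod_eq)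
qed

theorem lemma3:
  fixes N M :: nat
    and f :: "nat \<Rightarrow> 'a::euclidean_space \<Rightarrow> real"
    and A :: "'l \<Rightarrow> (nat \<Rightarrow> nat) \<Rightarrow> real"
    and Astar :: "(nat \<Rightarrow> nat) \<Rightarrow> real"
  assumes "even N"
    and "\<And>d. d < M \<Longrightarrow> square_integrable (f d)"
    and "L2_lin_indep M f"
    and "\<And>l. A l \<in> tensor_space N M"
    and "Astar \<in> tensor_space N M"
    and "Astar \<notin> range A"
    and "\<And>l. mat_rank (matricize N M (A l)) < mat_rank (matricize N M Astar)"
  shows "\<exists>\<epsilon>>0. \<forall>l. integral\<^sup>L (PiM {..<N} (\<lambda>_. lborel))
            (\<lambda>x. (tensor_fun N M f (A l) x - tensor_fun N M f Astar x)\<^sup>2) > \<epsilon>"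
proof -
  note ev = assms(1) and sq = assms(2) and li = assms(3) and rk = assms(7)
  define K where "K = N div 2"
  define n where "n = M ^ K"
  have NK: "N = 2 * K" using ev by (simp add: K_def)
  define idx where "idx i j = (\<lambda>k. if k < N then (if even k then i div M ^ (K - 1 - k div 2) mod M
                   else j div M ^ (K - 1 - k div 2) mod M) else undefined)" for i j :: nat
  have carr: "matricize N M B \<in> carrier_mat n n" for B
    by (simp add: matricize_def Let_def K_def n_def)
  have ent: "matricize N M B $$ (i,j) = B (idx i j)" if "i < n" "j < n" for B i j
    using that unfolding idx_def n_def K_def by (simp add: matricize_def Let_def)
  have rkeq: "mat_rank (matricize N M B) = vec_space.rank n (matricize N M B)" for B
    using carr[of B] by (simp add: mat_rank_def)
  have idxT: "idx i j \<in> tidx N M" if "i < n" "j < n" for i j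
  proof -
    have "M > 0" if "k < N" for k
    proof (rule ccontr)
      assume "\<not> M > 0"
      hence "M = 0" by simp
      moreover have "K > 0" using that NK by simp
      ultimately show False using \<open>i < n\<close> by (simp add: n_def zero_power)
    qed
    thus ?thesis by (auto simp: tidx_def idx_def PiE_def Pi_def extensional_def)
  qed
  have idxinj: "inj_on (\<lambda>(i,j). idx i j) ({..<n} \<times> {..<n})"
  proof (rule inj_onI, clarify)
    fix i j i' j' assume ij: "i < n" "j < n" "i' < n" "j' < n" and eq: "idx i j = idx i' j'"
    have "\<forall>p<K. i div M^p mod M = i' div M^p mod M"
    proof (intro allI impI)
      fix p assume p: "p < K"
      have "idx i j (2 * (K - 1 - p)) = idx i' j' (2 * (K - 1 - p))" using eq by simp
      moreover have "K - 1 - (K - 1 - p) = p" using p by simp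
      ultimately show "i div M^p mod M = i' div M^p mod M" using p NK by (simp add: idx_def)
    qed
    moreover have "\<forall>p<K. j div M^p mod M = j' div M^p mod M"
    proof (intro allI impI)
      fix p assume p: "p < K"
      define k where "k = 2 * (K - 1 - p) + 1"
      have k: "k < N" "\<not> even k" "K - 1 - k div 2 = p" using p NK by (auto simp: k_def)
      have "idx i j k = idx i' j' k" using eq by simp
      thus "j div M^p mod M = j' div M^p mod M" using k by (simp add: idx_def)
    qed
    ultimately show "i = i' \<and> j = j'" using ij digits_inj unfolding n_def by blast
  qed
  obtain \<delta> where \<delta>: "\<delta> > 0" "\<And>B. B \<in> carrier_mat n n \<Longrightarrow> vec_space.rank n B < vec_space.rank n (matricize N M Astar) \<Longrightarrow>
      \<delta> \<le> (\<Sum>i<n. \<Sum>j<n. (matricize N M Astar $$ (i,j) - B $$ (i,j))^2)"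
    using rank_gap[OF carr[of Astar]] by blast
  obtain c where c: "c > 0" "\<And>v. c * (\<Sum>d\<in>tidx N M. (v d)^2) \<le>
     integral\<^sup>L (PiM {..<N} (\<lambda>_. (lborel::'a measure))) (\<lambda>x. (tensor_fun N M f v x)^2)"
    using tensor_pd[OF sq li, where N=N] by blast
  show ?thesis
  proof (intro exI[of _ "c * \<delta> / 2"] conjI allI)
    show "c * \<delta> / 2 > 0" using c(1) \<delta>(1) by simp
    fix l
    define D where "D d = A l d - Astar d" for d
    have tfD: "tensor_fun N M f (A l) x - tensor_fun N M f Astar x = tensor_fun N M f D x" for x
      by (simp add: tensor_fun_def D_def sum_subtractf left_diff_distrib)
    have "\<delta> \<le> (\<Sum>i<n. \<Sum>j<n. (matricize N M Astar $$ (i,j) - matricize N M (A l) $$ (i,j))^2)"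
      using \<delta>(2)[OF carr] rk[of l] rkeq by simp
    also have "\<dots> = (\<Sum>(i,j)\<in>{..<n} \<times> {..<n}. (D (idx i j))^2)"
      by (simp add: sum.cartesian_product ent D_def power2_commute)
    also have "\<dots> = (\<Sum>d\<in>(\<lambda>(i,j). idx i j) ` ({..<n} \<times> {..<n}). (D d)^2)"
      by (subst sum.reindex[OF idxinj]) (simp add: case_prod_beta')
    also have "\<dots> \<le> (\<Sum>d\<in>tidx N M. (D d)^2)"
      using idxT by (intro sum_mono2 finite_tidx) auto
    finally have "c * \<delta> \<le> c * (\<Sum>d\<in>tidx N M. (D d)^2)" using c(1) by simp
    also have "\<dots> \<le> integral\<^sup>L (PiM {..<N} (\<lambda>_. lborel)) (\<lambda>x. (tensor_fun N M f D x)^2)" by (rule c(2))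
    finally show "c * \<delta> / 2 < integral\<^sup>L (PiM {..<N} (\<lambda>_. lborel))
            (\<lambda>x. (tensor_fun N M f (A l) x - tensor_fun N M f Astar x)\<^sup>2)"
      unfolding tfD using mult_pos_pos[OF c(1) \<delta>(1)] by linarith
  qed
qed

end
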